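(* Let $d_1,d_2\ge1$ be integers and $s_1,s_2$ real numbers, and define $$h_a(x_1,x_2)=\int_{-1}^1(1+x_1z)^{d_1}(1+x_2z)^{d_2}\big(x_a(x_as_a-1)(1-z^2)+z(1-x_a^2)\big)\,dz,\qquad a=1,2.$$ If $s_1>1$ and $s_2<-1$, then there exist $x_1\in(0,1)$ and $x_2\in(-1,0)$ with $h_1(x_1,x_2)=0=h_2(x_1,x_2)$. *)

theory Defs
  imports "HOL-Analysis.Analysis"
begin

definition h_int :: "nat \<Rightarrow> nat \<Rightarrow> real \<Rightarrow> real \<Rightarrow> real \<Rightarrow> real \<Rightarrow> real \<Rightarrow> real" where
  "h_int d1 d2 x1 x2 xa sa z =
     (1 + x1 * z) ^ d1 * (1 + x2 * z) ^ d2 * (xa * (xa * sa - 1) * (1 - z^2) + z * (1 - xa^2))"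

definition h1 :: "nat \<Rightarrow> nat \<Rightarrow> real \<Rightarrow> real \<Rightarrow> real \<Rightarrow> real \<Rightarrow> real" where
  "h1 d1 d2 s1 s2 x1 x2 = integral {-1..1} (h_int d1 d2 x1 x2 x1 s1)"

definition h2 :: "nat \<Rightarrow> nat \<Rightarrow> real \<Rightarrow> real \<Rightarrow> real \<Rightarrow> real \<Rightarrow> real" where
  "h2 d1 d2 s1 s2 x1 x2 = integral {-1..1} (h_int d1 d2 x1 x2 x2 s2)"

end

theory Submission
  imports Defs
begin

definition CC :: "nat \<Rightarrow> nat \<Rightarrow> real \<Rightarrow> real \<Rightarrow> real" where
  "CC d1 d2 x1 x2 = integral {-1..1} (\<lambda>z. z * ((1 + x1 * z) ^ d1 * (1 + x2 * z) ^ d2))"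
definition AA :: "nat \<Rightarrow> nat \<Rightarrow> real \<Rightarrow> real \<Rightarrow> real" where
  "AA d1 d2 x1 x2 = integral {-1..1} (\<lambda>z. (1 + x1 * z) ^ d1 * (1 + x2 * z) ^ d2 * (1 - z^2))"

lemma h_decomp:
  "integral {-1..1} (h_int d1 d2 x1 x2 xa sa) = xa*(xa * sa-1) * AA d1 d2 x1 x2 + (1 - xa^2) * CC d1 d2 x1 x2"
proof -
  have e: "h_int d1 d2 x1 x2 xa sa = (\<lambda>z. xa*(xa * sa-1) * ((1 + x1 * z) ^ d1 * (1 + x2 * z) ^ d2 * (1 - z^2))
      + (1 - xa^2) * (z * ((1 + x1 * z) ^ d1 * (1 + x2 * z) ^ d2)))"
    by (rule ext) (simp add: h_int_def algebra_simps)
  have i1: "(\<lambda>z. xa*(xa * sa-1) * ((1 + x1 * z) ^ d1 * (1 + x2 * z) ^ d2 * (1 - z^2))) integrable_on {-1..1::real}"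
    by (intro integrable_continuous_interval continuous_intros)
  have i2: "(\<lambda>z. (1 - xa^2) * (z * ((1 + x1 * z) ^ d1 * (1 + x2 * z) ^ d2))) integrable_on {-1..1::real}"
    by (intro integrable_continuous_interval continuous_intros)
  show ?thesis unfolding e integral_add[OF i1 i2] by (simp add: AA_def CC_def)
qed

lemma nonneg1: "x \<in> {-1..1} \<Longrightarrow> z \<in> {-1..1} \<Longrightarrow> (0::real) \<le> 1 + x * z"
proof -
  assume a: "x \<in> {-1..1}" "z \<in> {-1..1}"
  have "\<bar>x * z\<bar> \<le> 1" using a by (auto simp: abs_mult intro!: mult_le_one)
  then show ?thesis by (simp add: abs_le_iff)
qed

lemma pos_int:
  fixes f :: "real \<Rightarrow> real"
  assumes "continuous_on {-1..1} f" "\<And>z. z \<in> {-1..1} \<Longrightarrow> 0 \<le> f z" "c \<in> {-1..1}" "f c > 0"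
  shows "integral {-1..1} f > 0"
proof -
  have "integral {-1..1} f \<ge> 0"
    using assms by (intro integral_nonneg integrable_continuous_real) auto
  moreover have "integral {-1..1} f \<noteq> 0"
    using integral_eq_0_iff[of "-1" 1 f] assms by force
  ultimately show ?thesis by linarith
qed

lemma Lz:
  assumes t: "0 < t" "t \<le> (1::real)" and d: "d \<ge> 1"
  shows "integral {-1..1} (\<lambda>z. z * (1 + t*z)^d) > 0"
proof -
  let ?f = "\<lambda>z::real. z * (1 + t*z)^d"
  have r: "integral {-1..1} (\<lambda>z. ?f (-z)) = integral {-1..1} ?f"
    using Henstock_Kurzweil_Integration.integral_reflect_real[of 1 "-1" ?f] by (simp only: minus_minus)
  have i1: "?f integrable_on {-1..1}" by (intro integrable_continuous_interval continuous_intros)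
  have i2: "(\<lambda>z. ?f (-z)) integrable_on {-1..1}" by (intro integrable_continuous_interval continuous_intros)
  have "integral {-1..1} (\<lambda>z. ?f z + ?f (-z)) > 0"
  proof (rule pos_int[where c="1/2"])
    show "continuous_on {-1..1} (\<lambda>z. ?f z + ?f (-z))" by (intro continuous_intros)
    show "0 \<le> ?f z + ?f (-z)" if z: "z \<in> {-1..1}" for z
    proof (cases "z \<ge> 0")
      case True
      have "(1 - t*z)^d \<le> (1 + t*z)^d"
        using nonneg1[of "-t" z] z t True by (intro power_mono) (auto intro!: mult_nonneg_nonneg)
      then have "z * (1 - t*z)^d \<le> z * (1 + t*z)^d" using True by (intro mult_left_mono) auto
      then show ?thesis by simp
    next
      case False
      have "(1 + t*z)^d \<le> (1 - t*z)^d"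
        using nonneg1[of "t" z] z t False by (intro power_mono) (auto simp: mult_nonneg_nonpos)
      then have "z * (1 - t*z)^d \<le> z * (1 + t*z)^d" using False
        by (intro mult_left_mono_neg) auto
      then show ?thesis by simp
    qed
    have "(1 - t/2)^d < (1 + t/2)^d"
      using t d by (intro power_strict_mono) auto
    then show "0 < ?f (1/2) + ?f (-(1/2))" by simp
  qed simp
  also have "integral {-1..1} (\<lambda>z. ?f z + ?f (-z)) = 2 * integral {-1..1} ?f"
    using integral_add[OF i1 i2] r by simp
  finally show ?thesis by simp
qed

lemma cont_CC0: "continuous_on UNIV (\<lambda>p. CC d1 d2 (fst p) (snd p))"
proof -
  have "continuous_on (UNIV \<times> cbox (-1) 1) (\<lambda>(p, z). z*((1+fst p*z)^d1*(1+snd p*z)^d2::real))"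
    by (simp add: split_beta) (intro continuous_intros)
  from integral_continuous_on_param[OF this] show ?thesis by (simp add: CC_def)
qed

lemma cont_AA0: "continuous_on UNIV (\<lambda>p. AA d1 d2 (fst p) (snd p))"
proof -
  have "continuous_on (UNIV \<times> cbox (-1) 1) (\<lambda>(p, z). (1+fst p*z)^d1*(1+snd p*z)^d2*(1-z^2)::real)"
    by (simp add: split_beta) (intro continuous_intros)
  from integral_continuous_on_param[OF this] show ?thesis by (simp add: AA_def)
qed

lemma cont_CC[continuous_intros]:
  "continuous_on S f \<Longrightarrow> continuous_on S g \<Longrightarrow> continuous_on S (\<lambda>x. CC d1 d2 (f x) (g x))"
  using continuous_on_compose2[OF cont_CC0, of S "\<lambda>x. (f x, g x)"]
  by (auto intro: continuous_on_Pair)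

lemma cont_AA[continuous_intros]:
  "continuous_on S f \<Longrightarrow> continuous_on S g \<Longrightarrow> continuous_on S (\<lambda>x. AA d1 d2 (f x) (g x))"
  using continuous_on_compose2[OF cont_AA0, of S "\<lambda>x. (f x, g x)"]
  by (auto intro: continuous_on_Pair)

lemma CC_mono:
  assumes "-1 \<le> x1" "x1 \<le> y1" "y1 \<le> 1" "-1 \<le> x2" "x2 \<le> y2" "y2 \<le> (1::real)"
  shows "CC d1 d2 x1 x2 \<le> CC d1 d2 y1 y2"
  unfolding CC_def
proof (rule integral_le)
  show "(\<lambda>z. z * ((1 + x1 * z) ^ d1 * (1 + x2 * z) ^ d2)) integrable_on {-1..1::real}"
    by (intro integrable_continuous_interval continuous_intros)
  show "(\<lambda>z. z * ((1 + y1 * z) ^ d1 * (1 + y2 * z) ^ d2)) integrable_on {-1..1::real}"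
    by (intro integrable_continuous_interval continuous_intros)
  fix z :: real assume z: "z \<in> {-1..1}"
  have n: "0 \<le> 1 + x1*z" "0 \<le> 1 + y1*z" "0 \<le> 1 + x2*z" "0 \<le> 1 + y2*z"
    using nonneg1[OF _ z] assms by auto
  show "z * ((1 + x1 * z) ^ d1 * (1 + x2 * z) ^ d2) \<le> z * ((1 + y1 * z) ^ d1 * (1 + y2 * z) ^ d2)"
  proof (cases "z \<ge> 0")
    case True
    have "x1 * z \<le> y1 * z" "x2 * z \<le> y2 * z" using True assms by (auto intro: mult_right_mono)
    then have "(1 + x1 * z) ^ d1 * (1 + x2 * z) ^ d2 \<le> (1 + y1 * z) ^ d1 * (1 + y2 * z) ^ d2"
      using n by (intro mult_mono power_mono) auto
    then show ?thesis using True by (intro mult_left_mono) auto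
  next
    case False
    have "y1 * z \<le> x1 * z" "y2 * z \<le> x2 * z" using False assms by (auto intro: mult_right_mono_neg)
    then have "(1 + y1 * z) ^ d1 * (1 + y2 * z) ^ d2 \<le> (1 + x1 * z) ^ d1 * (1 + x2 * z) ^ d2"
      using n by (intro mult_mono power_mono) auto
    then show ?thesis using False by (intro mult_left_mono_neg) auto
  qed
qed

lemma AA_nonneg:
  assumes "x1 \<in> {-1..1}" "x2 \<in> {-1..1}"
  shows "0 \<le> AA d1 d2 x1 x2"
  unfolding AA_def
proof (rule integral_nonneg)
  show "(\<lambda>z. (1 + x1 * z) ^ d1 * (1 + x2 * z) ^ d2 * (1 - z^2)) integrable_on {-1..1::real}"
    by (intro integrable_continuous_interval continuous_intros)
  fix z :: real assume z: "z \<in> {-1..1}"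
  have "z^2 \<le> 1" using z by (auto simp: abs_le_iff intro!: power_le_one_iff[THEN iffD2] abs_square_le_1[THEN iffD2])
  then show "0 \<le> (1 + x1 * z) ^ d1 * (1 + x2 * z) ^ d2 * (1 - z^2)"
    using nonneg1[OF assms(1) z] nonneg1[OF assms(2) z] by auto
qed

lemma AA_pos:
  assumes "x1 \<in> {-1..1}" "x2 \<in> {-1..1}"
  shows "0 < AA d1 d2 x1 x2"
  unfolding AA_def
proof (rule pos_int[where c=0])
  show "continuous_on {-1..1} (\<lambda>z. (1 + x1 * z) ^ d1 * (1 + x2 * z) ^ d2 * (1 - z^2::real))"
    by (intro continuous_intros)
  fix z :: real assume z: "z \<in> {-1..1}"
  have "z^2 \<le> 1" using z by (auto simp: abs_le_iff intro!: abs_square_le_1[THEN iffD2])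
  then show "0 \<le> (1 + x1 * z) ^ d1 * (1 + x2 * z) ^ d2 * (1 - z^2)"
    using nonneg1[OF assms(1) z] nonneg1[OF assms(2) z] by auto
qed auto

lemma h1_eq: "h1 d1 d2 s1 s2 x1 x2 = x1*(x1 * s1-1) * AA d1 d2 x1 x2 + (1 - x1^2) * CC d1 d2 x1 x2"
  by (simp add: h1_def h_decomp)
lemma h2_eq: "h2 d1 d2 s1 s2 x1 x2 = x2*(x2 * s2-1) * AA d1 d2 x1 x2 + (1 - x2^2) * CC d1 d2 x1 x2"
  by (simp add: h2_def h_decomp)

lemma CC_t0: "0 < t \<Longrightarrow> t \<le> 1 \<Longrightarrow> d1 \<ge> 1 \<Longrightarrow> CC d1 d2 t 0 > 0"
  using Lz[of t d1] by (simp add: CC_def)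

lemma CC_0t: assumes "0 < t" "t \<le> 1" "d2 \<ge> 1" shows "CC d1 d2 0 (-t) < 0"
proof -
  let ?g = "\<lambda>z::real. z * (1 + t*z)^d2"
  have r: "integral {-1..1} (\<lambda>z. ?g (-z)) = integral {-1..1} ?g"
    using Henstock_Kurzweil_Integration.integral_reflect_real[of 1 "-1" ?g] by (simp only: minus_minus)
  have i: "(\<lambda>z. ?g (-z)) integrable_on {-1..1}" by (intro integrable_continuous_interval continuous_intros)
  have "CC d1 d2 0 (-t) = integral {-1..1} (\<lambda>z. - ?g (-z))"
    unfolding CC_def by (rule arg_cong[where f="integral _"]) (simp add: fun_eq_iff)
  also have "\<dots> = - integral {-1..1} ?g" by (simp only: integral_neg r)
  finally show ?thesis using Lz[OF assms] by simp
qed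

theorem lemma3p5:
  fixes d1 d2 :: nat and s1 s2 :: real
  assumes "d1 \<ge> 1" and "d2 \<ge> 1" and "s1 > 1" and "s2 < -1"
  shows "\<exists>x1 x2. x1 \<in> {0<..<1} \<and> x2 \<in> {-1<..<0} \<and>
           h1 d1 d2 s1 s2 x1 x2 = 0 \<and> h2 d1 d2 s1 s2 x1 x2 = 0"
proof -
  define t where "t = min (1/s1) (-1/s2)"
  have t0: "0 < t" using assms by (simp add: t_def)
  have t1: "t < 1" using assms by (simp add: t_def min_less_iff_disj)
  have ts1: "t * s1 \<le> 1" using assms by (simp add: t_def min_def field_simps)
  have ts2: "- (t * s2) \<le> 1" using assms by (simp add: t_def min_def field_simps)
  obtain e dl where e: "0 < e" "e \<le> t" and dl: "0 < dl" "dl \<le> t" and C0: "CC d1 d2 e (-dl) = 0"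
  proof (cases "CC d1 d2 t (-t) \<ge> 0")
    case True
    have "\<exists>u. 0 \<le> u \<and> u \<le> t \<and> CC d1 d2 u (-t) = 0"
      using CC_0t[OF t0 _ assms(2), of d1] t1 t0 True
      by (intro IVT') (auto intro!: continuous_intros)
    then obtain u where u: "0 \<le> u" "u \<le> t" "CC d1 d2 u (-t) = 0" by blast
    have "u \<noteq> 0" using u CC_0t[OF t0 _ assms(2), of d1] t1 by auto
    then show ?thesis using that[of u t] u t0 by auto
  next
    case False
    have "\<exists>u. 0 \<le> u \<and> u \<le> t \<and> CC d1 d2 t (-u) = 0"
      using CC_t0[OF t0 _ assms(1), of d2] t1 t0 False
      by (intro IVT2') (auto intro!: continuous_intros)
    then obtain u where u: "0 \<le> u" "u \<le> t" "CC d1 d2 t (-u) = 0" by blast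
    have "u \<noteq> 0" using u CC_t0[OF t0 _ assms(1), of d2] t1 by auto
    then show ?thesis using that[of t u] u t0 by auto
  qed
  have es1: "e * s1 \<le> 1"
  proof -
    have "e * s1 \<le> t * s1" using e assms by (intro mult_right_mono) auto
    then show ?thesis using ts1 by simp
  qed
  have ds2: "- (dl * s2) \<le> 1"
  proof -
    have "dl * (-s2) \<le> t * (-s2)" using dl assms by (intro mult_right_mono) auto
    then show ?thesis using ts2 by simp
  qed
  define H1 where "H1 p = h1 d1 d2 s1 s2 (fst p) (snd p)" for p
  define H2 where "H2 p = h2 d1 d2 s1 s2 (fst p) (snd p)" for p
  have L1: "H1 (e, x2) \<le> 0" if x2: "x2 \<in> {-1..-dl}" for x2
  proof -
    have c: "CC d1 d2 e x2 \<le> 0" using CC_mono[of e e x2 "-dl" d1 d2] C0 x2 e dl t1 by auto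
    have a: "0 \<le> AA d1 d2 e x2" using AA_nonneg[of e x2 d1 d2] x2 e dl t1 by auto
    have "e * (e * s1 - 1) \<le> 0" using es1 e by (intro mult_nonneg_nonpos) auto
    then have "e*(e * s1-1) * AA d1 d2 e x2 \<le> 0" using a by (rule mult_nonpos_nonneg)
    moreover have "1 - e^2 \<ge> 0" using e t1 by (simp add: abs_square_le_1)
    then have "(1 - e^2) * CC d1 d2 e x2 \<le> 0" using c by (rule mult_nonneg_nonpos)
    ultimately show ?thesis by (simp add: H1_def h1_eq)
  qed
  have R1: "H1 (1, x2) > 0" if x2: "x2 \<in> {-1..-dl}" for x2
    using AA_pos[of 1 x2 d1 d2] x2 dl t1 assms by (simp add: H1_def h1_eq)
  have T2: "H2 (x1, -dl) \<ge> 0" if x1: "x1 \<in> {e..1}" for x1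
  proof -
    have c: "CC d1 d2 x1 (-dl) \<ge> 0" using CC_mono[of e x1 "-dl" "-dl" d1 d2] C0 x1 e dl t1 by auto
    have a: "0 \<le> AA d1 d2 x1 (-dl)" using AA_nonneg[of x1 "-dl" d1 d2] x1 e dl t1 by auto
    have "(-dl) * ((-dl) * s2 - 1) \<ge> 0" using ds2 dl by (intro mult_nonpos_nonpos) auto
    then have "(-dl) * ((-dl) * s2 - 1) * AA d1 d2 x1 (-dl) \<ge> 0" using a by (rule mult_nonneg_nonneg)
    moreover have "1 - dl^2 \<ge> 0" using dl t1 by (simp add: abs_square_le_1)
    then have "(1 - dl^2) * CC d1 d2 x1 (-dl) \<ge> 0" using c by (rule mult_nonneg_nonneg)
    ultimately show ?thesis by (simp add: H2_def h2_eq)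
  qed
  have B2: "H2 (x1, -1) < 0" if x1: "x1 \<in> {e..1}" for x1
  proof -
    have "0 < AA d1 d2 x1 (-1)" using AA_pos[of x1 "-1" d1 d2] x1 e t1 by auto
    then have "(s2 + 1) * AA d1 d2 x1 (-1) < 0" using assms by (intro mult_neg_pos) auto
    then show ?thesis by (simp add: H2_def h2_eq algebra_simps)
  qed
  have cH1: "continuous_on UNIV H1" unfolding H1_def h1_eq by (intro continuous_intros)
  have cH2: "continuous_on UNIV H2" unfolding H2_def h2_eq by (intro continuous_intros)
  define S where "S = {e..1} \<times> {-1..-dl}"
  define F where "F p = (max e (min 1 (fst p - H1 p)), max (-1) (min (-dl) (snd p - H2 p)))" for p
  obtain p where p: "p \<in> S" "F p = p"
  proof (rule brouwer[of S F])
    show "compact S" unfolding S_def by (intro compact_Times compact_Icc)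
    show "convex S" unfolding S_def by (intro convex_Times convex_real_interval)
    show "S \<noteq> {}" unfolding S_def using e dl t1 by auto
    show "continuous_on S F" unfolding F_def
      by (intro continuous_intros continuous_on_subset[OF cH1] continuous_on_subset[OF cH2]) auto
    show "F \<in> S \<rightarrow> S" unfolding F_def S_def using e dl t1 by auto
  qed
  obtain x1 x2 where px: "p = (x1, x2)" by fastforce
  have x1S: "x1 \<in> {e..1}" and x2S: "x2 \<in> {-1..-dl}" using p px S_def by auto
  have f1: "x1 = max e (min 1 (x1 - H1 (x1, x2)))" and f2: "x2 = max (-1) (min (-dl) (x2 - H2 (x1, x2)))"
    using p(2) px by (auto simp: F_def)
  have z1: "H1 (x1, x2) = 0"
  proof (rule ccontr)
    assume ne: "H1 (x1, x2) \<noteq> 0"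
    show False
    proof (cases "H1 (x1, x2) > 0")
      case True
      then have "x1 = e" using f1 x1S by (auto simp: max_def min_def split: if_splits)
      then show False using L1[OF x2S] True by simp
    next
      case False
      then have "x1 = 1" using ne f1 x1S by (auto simp: max_def min_def split: if_splits)
      then show False using R1[OF x2S] False ne by simp
    qed
  qed
  have z2: "H2 (x1, x2) = 0"
  proof (rule ccontr)
    assume ne: "H2 (x1, x2) \<noteq> 0"
    show False
    proof (cases "H2 (x1, x2) > 0")
      case True
      then have "x2 = -1" using f2 x2S by (auto simp: max_def min_def split: if_splits)
      then show False using B2[OF x1S] True by simp
    next
      case False
      then have "x2 = -dl" using ne f2 x2S by (auto simp: max_def min_def split: if_splits)
      then show False using T2[OF x1S] False ne by simp
    qed
  qed
  have "x1 \<noteq> 1" using z1 R1[OF x2S] by auto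
  moreover have "x2 \<noteq> -1" using z2 B2[OF x1S] by auto
  ultimately show ?thesis using x1S x2S e dl z1 z2 unfolding H1_def H2_def
    by (intro exI[of _ x1] exI[of _ x2]) auto
qed

end
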